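(* Let $0<\alpha<\beta$ and let $A:\mathcal{C}_{\alpha}(\mathbb{R})\to\mathcal{C}_{\beta}(\mathbb{R})$ be a bounded linear operator. For $r>0$ let $B_r=\{f\in\mathcal{C}_{\alpha}(\mathbb{R}):\ |f|_{\alpha}<r\}$. Suppose that for every $X>0$ (and every $r>0$) the family of functions $\{(Af)|_{[-X,X]}:\ f\in B_r\}$ is uniformly equicontinuous. Then $A$, regarded as an operator $\mathcal{C}_{\alpha}(\mathbb{R})\to\mathcal{C}_{\alpha}(\mathbb{R})$, is compact.
   Context: For $\gamma\ge 0$, $\mathcal{C}_{\gamma}(\mathbb{R})$ denotes the Banach space of continuous functions $f:\mathbb{R}\to\mathbb{C}$ with $|f|_{\gamma}=\sup\{(1+|x|)^{\gamma}|f(x)|:\ x\in\mathbb{R}\}<\infty$, normed by $|\cdot|_{\gamma}$. *)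

theory Defs
  imports "HOL-Analysis.Analysis"
begin

definition Cw :: "real \<Rightarrow> (real \<Rightarrow> complex) set" where
  "Cw \<gamma> = {f. continuous_on UNIV f \<and>
                 bdd_above (range (\<lambda>x. (1 + \<bar>x\<bar>) powr \<gamma> * cmod (f x)))}"

definition wnorm :: "real \<Rightarrow> (real \<Rightarrow> complex) \<Rightarrow> real" where
  "wnorm \<gamma> f = (SUP x. (1 + \<bar>x\<bar>) powr \<gamma> * cmod (f x))"

definition bounded_linear_op ::
  "real \<Rightarrow> real \<Rightarrow> ((real \<Rightarrow> complex) \<Rightarrow> (real \<Rightarrow> complex)) \<Rightarrow> bool" where
  "bounded_linear_op \<alpha> \<beta> A \<longleftrightarrow>
     (\<forall>f\<in>Cw \<alpha>. A f \<in> Cw \<beta>) \<and>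
     (\<forall>f\<in>Cw \<alpha>. \<forall>g\<in>Cw \<alpha>. A (\<lambda>x. f x + g x) = (\<lambda>x. A f x + A g x)) \<and>
     (\<forall>f\<in>Cw \<alpha>. \<forall>c::complex. A (\<lambda>x. c * f x) = (\<lambda>x. c * A f x)) \<and>
     (\<exists>K. \<forall>f\<in>Cw \<alpha>. wnorm \<beta> (A f) \<le> K * wnorm \<alpha> f)"

definition compact_op :: "real \<Rightarrow> ((real \<Rightarrow> complex) \<Rightarrow> (real \<Rightarrow> complex)) \<Rightarrow> bool" where
  "compact_op \<alpha> A \<longleftrightarrow>
     (\<forall>fs :: nat \<Rightarrow> real \<Rightarrow> complex.
        (\<forall>n. fs n \<in> Cw \<alpha>) \<and> bdd_above (range (\<lambda>n. wnorm \<alpha> (fs n))) \<longrightarrow>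
        (\<exists>r g. strict_mono r \<and> g \<in> Cw \<alpha> \<and>
               (\<lambda>n. wnorm \<alpha> (\<lambda>x. A (fs (r n)) x - g x)) \<longlonglongrightarrow> 0))"

end

theory Submission
  imports Defs "HOL-Complex_Analysis.Great_Picard"
begin

lemma wnorm_ge_gen:
  assumes "\<And>y. (1 + \<bar>y\<bar>) powr \<gamma> * cmod (f y) \<le> B"
  shows "(1 + \<bar>x\<bar>) powr \<gamma> * cmod (f x) \<le> wnorm \<gamma> f"
  unfolding wnorm_def by (rule cSUP_upper) (use assms in \<open>auto intro!: bdd_aboveI2\<close>)

lemma wnorm_ge: "f \<in> Cw \<gamma> \<Longrightarrow> (1 + \<bar>x\<bar>) powr \<gamma> * cmod (f x) \<le> wnorm \<gamma> f"
  unfolding Cw_def wnorm_def by (auto intro: cSUP_upper)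

lemma wnorm_nonneg: "f \<in> Cw \<gamma> \<Longrightarrow> 0 \<le> wnorm \<gamma> f"
  using wnorm_ge[of f \<gamma> 0] by (meson mult_nonneg_nonneg norm_ge_zero order_trans powr_ge_zero)

lemma wnorm_nonneg_gen:
  assumes "\<And>y. (1 + \<bar>y\<bar>) powr \<gamma> * cmod (f y) \<le> B"
  shows "0 \<le> wnorm \<gamma> f"
  using wnorm_ge_gen[of \<gamma> f B 0, OF assms]
  by (meson mult_nonneg_nonneg norm_ge_zero order_trans powr_ge_zero)

lemma wnorm_le: "(\<And>x. (1 + \<bar>x\<bar>) powr \<gamma> * cmod (f x) \<le> B) \<Longrightarrow> wnorm \<gamma> f \<le> B"
  unfolding wnorm_def by (rule cSUP_least) auto

theorem proposition1:
  fixes \<alpha> \<beta> :: real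
    and A :: "(real \<Rightarrow> complex) \<Rightarrow> (real \<Rightarrow> complex)"
  assumes "0 < \<alpha>" and "\<alpha> < \<beta>"
    and "bounded_linear_op \<alpha> \<beta> A"
    and equicont: "\<And>X r. X > 0 \<Longrightarrow> r > 0 \<Longrightarrow>
         \<forall>\<epsilon>>0. \<exists>\<delta>>0. \<forall>f\<in>{f\<in>Cw \<alpha>. wnorm \<alpha> f < r}. \<forall>x\<in>{-X..X}. \<forall>y\<in>{-X..X}.
            \<bar>x - y\<bar> < \<delta> \<longrightarrow> cmod (A f x - A f y) < \<epsilon>"
  shows "compact_op \<alpha> A"
proof -
  from assms(3) obtain K where AC: "\<forall>f\<in>Cw \<alpha>. A f \<in> Cw \<beta>"
    and K: "\<forall>f\<in>Cw \<alpha>. wnorm \<beta> (A f) \<le> K * wnorm \<alpha> f"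
    unfolding bounded_linear_op_def by blast
  show ?thesis unfolding compact_op_def
  proof (intro allI impI)
    fix fs :: "nat \<Rightarrow> real \<Rightarrow> complex"
    assume H: "(\<forall>n. fs n \<in> Cw \<alpha>) \<and> bdd_above (range (\<lambda>n. wnorm \<alpha> (fs n)))"
    then obtain M0 where M0: "\<And>n. wnorm \<alpha> (fs n) \<le> M0" by (auto simp: bdd_above_def)
    define M where "M = \<bar>M0\<bar>"
    have fsC: "fs n \<in> Cw \<alpha>" for n using H by blast
    have M: "wnorm \<alpha> (fs n) < M + 1" for n using M0[of n] unfolding M_def by linarith
    have M0': "0 \<le> M" by (simp add: M_def)
    define C where "C = \<bar>K\<bar> * M"
    have C0: "0 \<le> C" unfolding C_def using M0' by simp
    define h where "h n = A (fs n)" for n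
    have hC: "h n \<in> Cw \<beta>" for n using AC fsC h_def by auto
    have hcont: "continuous_on UNIV (h n)" for n using hC[of n] by (simp add: Cw_def)
    have hnorm: "wnorm \<beta> (h n) \<le> C" for n
    proof -
      have w0: "0 \<le> wnorm \<alpha> (fs n)" using wnorm_nonneg[OF fsC[of n]] .
      have "wnorm \<beta> (h n) \<le> K * wnorm \<alpha> (fs n)" using K fsC h_def by auto
      also have "\<dots> \<le> \<bar>K\<bar> * wnorm \<alpha> (fs n)" using w0 by (simp add: mult_right_mono)
      also have "\<dots> \<le> \<bar>K\<bar> * M" using M0[of n] unfolding M_def
        by (intro mult_left_mono) auto
      finally show ?thesis by (simp add: C_def)
    qed
    have hbd: "(1 + \<bar>x\<bar>) powr \<beta> * cmod (h n x) \<le> C" for n x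
      using wnorm_ge[OF hC] hnorm order_trans by blast
    have hbd2: "cmod (h n x) \<le> C / (1 + \<bar>x\<bar>) powr \<beta>" for n x
      using hbd[of x n] by (simp add: pos_le_divide_eq mult.commute)
    have hbd3: "cmod (h n x) \<le> C" for n x
    proof -
      have "1 \<le> (1 + \<bar>x\<bar>) powr \<beta>" using assms by (intro ge_one_powr_ge_zero) auto
      then have "C / (1 + \<bar>x\<bar>) powr \<beta> \<le> C" using C0
        by (simp add: divide_le_eq mult_le_cancel_left1 mult.commute)
      then show ?thesis using hbd2[of n x] by linarith
    qed
    define S where "S i = {-real i..real i}" for i :: nat
    have equi: "\<exists>d>0. \<forall>n y. y \<in> S i \<and> norm (x - y) < d \<longrightarrow> norm (h n x - h n y) < e"
      if "x \<in> S i" "0 < e" for i x e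
    proof -
      have "\<forall>\<epsilon>>0. \<exists>\<delta>>0. \<forall>f\<in>{f\<in>Cw \<alpha>. wnorm \<alpha> f < M + 1}. \<forall>x\<in>{-(real i + 1)..real i + 1}.
            \<forall>y\<in>{-(real i + 1)..real i + 1}. \<bar>x - y\<bar> < \<delta> \<longrightarrow> cmod (A f x - A f y) < \<epsilon>"
        using equicont[of "real i + 1" "M + 1"] M0' by auto
      then obtain d where "d > 0" and d: "\<forall>f\<in>{f\<in>Cw \<alpha>. wnorm \<alpha> f < M + 1}. \<forall>x\<in>{-(real i + 1)..real i + 1}.
            \<forall>y\<in>{-(real i + 1)..real i + 1}. \<bar>x - y\<bar> < d \<longrightarrow> cmod (A f x - A f y) < e"
        using \<open>0 < e\<close> by blast
      show ?thesis
      proof (intro exI[of _ d] conjI allI impI)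
        fix n y assume "y \<in> S i \<and> norm (x - y) < d"
        then show "norm (h n x - h n y) < e"
          using d fsC[of n] M[of n] that(1) unfolding S_def h_def by auto
      qed (use \<open>d > 0\<close> in auto)
    qed
    define P where "P i s \<longleftrightarrow> (\<forall>e>0. \<exists>N. \<forall>m n x. N \<le> m \<and> N \<le> n \<and> x \<in> S i \<longrightarrow>
        cmod (h (s m) x - h (s n) x) < e)" for i and s :: "nat \<Rightarrow> nat"
    obtain k :: "nat \<Rightarrow> nat" where k: "strict_mono k" "\<And>i. P i (id \<circ> k)"
    proof (rule subsequence_diagonalization_lemma[of P id])
      fix i and r :: "nat \<Rightarrow> nat"
      obtain g and k :: "nat \<Rightarrow> nat" where "continuous_on (S i) g" "strict_mono k"
        and conv: "\<And>e. 0 < e \<Longrightarrow> \<exists>N. \<forall>n x. n \<ge> N \<and> x \<in> S i \<longrightarrow> norm ((h \<circ> r) (k n) x - g x) < e"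
      proof (rule Arzela_Ascoli[of "S i" "h \<circ> r" C])
        show "compact (S i)" by (simp add: S_def)
        show "\<And>n x. x \<in> S i \<Longrightarrow> norm ((h \<circ> r) n x) \<le> C" using hbd3 by simp
        show "\<And>x e. x \<in> S i \<Longrightarrow> 0 < e \<Longrightarrow> \<exists>d>0. \<forall>n y. y \<in> S i \<and> norm (x - y) < d \<longrightarrow>
                 norm ((h \<circ> r) n x - (h \<circ> r) n y) < e"
        proof -
          fix x and e :: real assume "x \<in> S i" "0 < e"
          then obtain d where "d > 0" and d: "\<forall>n y. y \<in> S i \<and> norm (x - y) < d \<longrightarrow> norm (h n x - h n y) < e"
            using equi by blast
          show "\<exists>d>0. \<forall>n y. y \<in> S i \<and> norm (x - y) < d \<longrightarrow> norm ((h \<circ> r) n x - (h \<circ> r) n y) < e"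
            using \<open>d > 0\<close> d by auto
        qed
      qed (rule that, assumption+)
      have "P i (r \<circ> k)" unfolding P_def
      proof (intro allI impI)
        fix e :: real assume "e > 0"
        then obtain N where N: "\<forall>n x. n \<ge> N \<and> x \<in> S i \<longrightarrow> norm ((h \<circ> r) (k n) x - g x) < e/2"
          using conv[of "e/2"] by auto
        show "\<exists>N. \<forall>m n x. N \<le> m \<and> N \<le> n \<and> x \<in> S i \<longrightarrow> cmod (h ((r \<circ> k) m) x - h ((r \<circ> k) n) x) < e"
        proof (intro exI[of _ N] allI impI)
          fix m n x assume mn: "N \<le> m \<and> N \<le> n \<and> x \<in> S i"
          have "cmod (h ((r \<circ> k) m) x - h ((r \<circ> k) n) x)
               \<le> cmod (h ((r \<circ> k) m) x - g x) + cmod (h ((r \<circ> k) n) x - g x)"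
            using norm_triangle_ineq4[of "h ((r \<circ> k) m) x - g x" "h ((r \<circ> k) n) x - g x"] by simp
          also have "\<dots> < e/2 + e/2" using N mn by (intro add_strict_mono) auto
          finally show "cmod (h ((r \<circ> k) m) x - h ((r \<circ> k) n) x) < e" by simp
        qed
      qed
      then show "\<exists>k. strict_mono k \<and> P i (r \<circ> k)" using \<open>strict_mono k\<close> by blast
    next
      fix i and r k1 k2 :: "nat \<Rightarrow> nat" and N
      assume a: "P i (r \<circ> k1)" "\<And>j. N \<le> j \<Longrightarrow> \<exists>j'. j \<le> j' \<and> k2 j = k1 j'"
      show "P i (r \<circ> k2)" unfolding P_def
      proof (intro allI impI)
        fix e :: real assume "e > 0"
        obtain N1 where N1: "\<forall>m n x. N1 \<le> m \<and> N1 \<le> n \<and> x \<in> S i \<longrightarrow>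
            cmod (h ((r \<circ> k1) m) x - h ((r \<circ> k1) n) x) < e"
          using a(1) \<open>e > 0\<close> unfolding P_def by blast
        show "\<exists>N. \<forall>m n x. N \<le> m \<and> N \<le> n \<and> x \<in> S i \<longrightarrow> cmod (h ((r \<circ> k2) m) x - h ((r \<circ> k2) n) x) < e"
        proof (intro exI[of _ "max N N1"] allI impI)
          fix m n x assume mn: "max N N1 \<le> m \<and> max N N1 \<le> n \<and> x \<in> S i"
          obtain m' where m': "m \<le> m'" "k2 m = k1 m'" using a(2)[of m] mn by auto
          obtain n' where n': "n \<le> n'" "k2 n = k1 n'" using a(2)[of n] mn by auto
          show "cmod (h ((r \<circ> k2) m) x - h ((r \<circ> k2) n) x) < e"
            using N1[rule_format, of m' n' x] m' n' mn by simp
        qed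
      qed
    qed (rule that, assumption+)
    define hk where "hk n = h (k n)" for n
    have Pk: "\<forall>e>0. \<exists>N. \<forall>m n x. N \<le> m \<and> N \<le> n \<and> x \<in> S i \<longrightarrow> cmod (hk m x - hk n x) < e" for i
      using k(2)[of i] unfolding P_def hk_def by simp
    have inS: "x \<in> S (nat \<lceil>\<bar>x\<bar>\<rceil>)" for x unfolding S_def
      using le_of_int_ceiling[of "\<bar>x\<bar>"] abs_ge_self[of x] abs_ge_minus_self[of x] by (simp; linarith)
    have cauchy: "Cauchy (\<lambda>n. hk n x)" for x
      unfolding Cauchy_def dist_norm using Pk[of "nat \<lceil>\<bar>x\<bar>\<rceil>"] inS[of x] by meson
    define g where "g x = lim (\<lambda>n. hk n x)" for x
    have gl: "(\<lambda>n. hk n x) \<longlonglongrightarrow> g x" for x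
      using cauchy[of x] unfolding g_def by (simp add: Cauchy_convergent_iff convergent_LIMSEQ_iff)
    have unif: "\<exists>N. \<forall>n\<ge>N. \<forall>x\<in>S i. cmod (hk n x - g x) < e" if "e > 0" for i e
    proof -
      obtain N where N: "\<forall>m n x. N \<le> m \<and> N \<le> n \<and> x \<in> S i \<longrightarrow> cmod (hk m x - hk n x) < e/2"
        using Pk[of i] \<open>e > 0\<close> half_gt_zero by blast
      have "cmod (hk n x - g x) \<le> e/2" if "n \<ge> N" "x \<in> S i" for n x
      proof (rule LIMSEQ_le_const2)
        show "(\<lambda>m. cmod (hk n x - hk m x)) \<longlonglongrightarrow> cmod (hk n x - g x)"
          by (intro tendsto_intros gl)
        show "\<exists>M. \<forall>m\<ge>M. cmod (hk n x - hk m x) \<le> e/2" using N that by (meson less_imp_le)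
      qed
      then have "\<forall>n\<ge>N. \<forall>x\<in>S i. cmod (hk n x - g x) < e" using \<open>e > 0\<close> by force
      then show ?thesis by blast
    qed
    have gcont_i: "continuous_on (S i) g" for i
    proof (rule uniform_limit_theorem[where f=hk and F=sequentially])
      show "\<forall>\<^sub>F n in sequentially. continuous_on (S i) (hk n)"
        using hcont continuous_on_subset[OF hcont] by (simp add: hk_def)
      show "uniform_limit (S i) hk g sequentially"
        unfolding uniform_limit_sequentially_iff dist_norm using unif by blast
    qed simp
    have gcont: "continuous_on UNIV g"
    proof (rule continuous_at_imp_continuous_on, intro ballI)
      fix x :: real
      have "x \<in> interior (S (nat \<lceil>\<bar>x\<bar>\<rceil> + 1))" unfolding S_def by (auto simp: abs_less_iff) linarith+
      then show "isCont g x" using continuous_on_interior gcont_i by blast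
    qed
    have gbd: "cmod (g x) \<le> C / (1 + \<bar>x\<bar>) powr \<beta>" for x
      by (rule LIMSEQ_le_const2[OF tendsto_norm[OF gl]]) (use hbd2 in \<open>auto simp: hk_def\<close>)
    have gbd2: "(1 + \<bar>x\<bar>) powr \<beta> * cmod (g x) \<le> C" for x
      using gbd[of x] by (simp add: pos_le_divide_eq mult.commute)
    have powle: "(1 + \<bar>x\<bar>) powr \<alpha> \<le> (1 + \<bar>x\<bar>) powr \<beta>" for x
      by (rule powr_mono) (use assms in auto)
    have diffbd: "(1 + \<bar>x\<bar>) powr \<alpha> * cmod (hk n x - g x) \<le> 2 * C * (1 + \<bar>x\<bar>) powr (\<alpha> - \<beta>)" for n x
    proof -
      have "cmod (hk n x - g x) \<le> cmod (hk n x) + cmod (g x)" by (rule norm_triangle_ineq4)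
      also have "\<dots> \<le> 2 * C / (1 + \<bar>x\<bar>) powr \<beta>" using hbd2[of "k n" x] gbd[of x]
        by (simp add: hk_def add_divide_distrib[symmetric])
      finally have "cmod (hk n x - g x) \<le> 2 * C / (1 + \<bar>x\<bar>) powr \<beta>" .
      then have "(1 + \<bar>x\<bar>) powr \<alpha> * cmod (hk n x - g x) \<le> (1 + \<bar>x\<bar>) powr \<alpha> * (2 * C / (1 + \<bar>x\<bar>) powr \<beta>)"
        by (rule mult_left_mono) simp
      also have "\<dots> = 2 * C * (1 + \<bar>x\<bar>) powr (\<alpha> - \<beta>)" by (simp add: powr_diff)
      finally show ?thesis .
    qed
    have gCw: "g \<in> Cw \<alpha>" unfolding Cw_def
    proof (intro CollectI conjI gcont)
      show "bdd_above (range (\<lambda>x. (1 + \<bar>x\<bar>) powr \<alpha> * cmod (g x)))"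
      proof (rule bdd_aboveI2)
        fix x
        have "(1 + \<bar>x\<bar>) powr \<alpha> * cmod (g x) \<le> (1 + \<bar>x\<bar>) powr \<beta> * cmod (g x)"
          using powle by (rule mult_right_mono) simp
        then show "(1 + \<bar>x\<bar>) powr \<alpha> * cmod (g x) \<le> C" using gbd2[of x] by linarith
      qed
    qed
    have lim: "(\<lambda>n. wnorm \<alpha> (\<lambda>x. A (fs (k n)) x - g x)) \<longlonglongrightarrow> 0"
    proof (rule LIMSEQ_I)
      fix e :: real assume "e > 0"
      have "(\<lambda>i. 2 * C * (real i) powr (\<alpha> - \<beta>)) \<longlonglongrightarrow> 0"
        using tendsto_mult_right_zero[OF tendsto_neg_powr[OF _ filterlim_real_sequentially], of "\<alpha> - \<beta>" "2 * C"]
          assms by (simp add: mult.commute)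
      then obtain N0 where N0: "\<forall>n\<ge>N0. norm (2 * C * (real n) powr (\<alpha> - \<beta>) - 0) < e/2"
        using LIMSEQ_D[of _ 0 "e/2"] \<open>e > 0\<close> by (meson half_gt_zero)
      define i where "i = max N0 1"
      have i1: "1 \<le> real i" by (simp add: i_def)
      have i: "2 * C * (real i) powr (\<alpha> - \<beta>) < e/2" using N0[rule_format, of i] by (simp add: i_def)
      have pos: "0 < e / (2 * (1 + real i) powr \<alpha>)" using \<open>e > 0\<close> by simp
      obtain N where N: "\<forall>n\<ge>N. \<forall>x\<in>S i. cmod (hk n x - g x) < e / (2 * (1 + real i) powr \<alpha>)"
        using unif[OF pos] by blast
      show "\<exists>N. \<forall>n\<ge>N. norm (wnorm \<alpha> (\<lambda>x. A (fs (k n)) x - g x) - 0) < e"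
      proof (intro exI allI impI)
        fix n assume "N \<le> n"
        have bnd: "(1 + \<bar>x\<bar>) powr \<alpha> * cmod (A (fs (k n)) x - g x) \<le> e/2" for x
        proof (cases "x \<in> S i")
          case True
          then have "\<bar>x\<bar> \<le> real i" by (simp add: S_def abs_le_iff)
          then have p: "(1 + \<bar>x\<bar>) powr \<alpha> \<le> (1 + real i) powr \<alpha>" by (intro powr_mono2) (use assms in auto)
          have c: "cmod (hk n x - g x) < e / (2 * (1 + real i) powr \<alpha>)" using N True \<open>N \<le> n\<close> by blast
          have pp: "0 < (1 + real i) powr \<alpha>" by simp
          have c2: "(1 + real i) powr \<alpha> * cmod (hk n x - g x) \<le> e/2"
            using c pp by (simp add: pos_less_divide_eq mult_ac)
          have "(1 + \<bar>x\<bar>) powr \<alpha> * cmod (hk n x - g x) \<le> (1 + real i) powr \<alpha> * cmod (hk n x - g x)"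
            using p by (rule mult_right_mono) simp
          then show ?thesis using c2 by (simp add: hk_def h_def)
        next
          case False
          then have "real i \<le> 1 + \<bar>x\<bar>" by (auto simp: S_def abs_le_iff)
          then have "(1 + \<bar>x\<bar>) powr (\<alpha> - \<beta>) \<le> (real i) powr (\<alpha> - \<beta>)"
            using i1 assms by (intro powr_mono2') auto
          then have "2 * C * (1 + \<bar>x\<bar>) powr (\<alpha> - \<beta>) \<le> 2 * C * (real i) powr (\<alpha> - \<beta>)"
            using C0 by (intro mult_left_mono) auto
          then show ?thesis using diffbd[of x n] i by (simp add: hk_def h_def)
        qed
        have "wnorm \<alpha> (\<lambda>x. A (fs (k n)) x - g x) \<le> e/2" by (rule wnorm_le) (rule bnd)
        moreover have "0 \<le> wnorm \<alpha> (\<lambda>x. A (fs (k n)) x - g x)"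
          by (rule wnorm_nonneg_gen[where B="e/2"]) (rule bnd)
        ultimately show "norm (wnorm \<alpha> (\<lambda>x. A (fs (k n)) x - g x) - 0) < e" using \<open>e > 0\<close> by simp
      qed
    qed
    show "\<exists>r g. strict_mono r \<and> g \<in> Cw \<alpha> \<and> (\<lambda>n. wnorm \<alpha> (\<lambda>x. A (fs (r n)) x - g x)) \<longlonglongrightarrow> 0"
      using k(1) gCw lim by blast
  qed
qed

end
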